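(* Let $m,n$ be positive integers, $\delta>0$, $t>0$. Let $k$ be the smallest integer satisfying $1+2+\dots+2^k\ge n$, let $n_j=2^j$ for $j\in[k-1]$ and let $n_k$ be defined so that $n=\sum_{j\in[k]}n_j$. Then $$\mathrm{GW}(\mathcal{M}^{\mathrm{right}}(m,n,\delta,t)) \leq \sum_{j\in[k]}\mathrm{GW}\Big(\mathcal{A}\big(m,\,n_j,\,2t\sqrt{m/n_j}+\delta,\,t\sqrt{m/n}+\delta,\,t\big)\Big).$$
   Context: For $\theta\in\mathbb{R}^{m\times n}$: $\mathrm{TV}_r(\theta) = \sum_{i\in[m]}\sum_{j\in[n-1]}|\theta[i,j+1]-\theta[i,j]|$, $\mathrm{TV}_c(\theta) = \mathrm{TV}_r(\theta^T)$, $\mathrm{TV}(\theta) = \mathrm{TV}_r(\theta)+\mathrm{TV}_c(\theta)$, $\|\cdot\|$ is the Frobenius norm. $\mathcal{M}^{\mathrm{right}}(m,n,\delta,t) = \{\theta\in\mathbb{R}^{m\times n}: \mathrm{TV}(\theta)\le\|\theta[\cdot,n]\|_1+\delta,\ \|\theta\|\le t\}$ and $\mathcal{A}(m,n,u,v,t) = \{\theta\in\mathbb{R}^{m\times n}: \mathrm{TV}_r(\theta)\le u,\ \mathrm{TV}_c(\theta)\le v,\ \|\theta\|\le t\}$. $\mathrm{GW}(A) = \mathbb{E}\sup_{v\in A}\langle Z,v\rangle$ with $Z$ a matrix of i.i.d. standard normals of matching size. *)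

theory Defs
  imports "HOL-Probability.Probability"
begin

text \<open>Matrices in R^{m x n} are represented as functions on nat x nat, 0-indexed
  (entry (i,j) with i < m, j < n), vanishing outside the index range.\<close>

definition matrices :: "nat \<Rightarrow> nat \<Rightarrow> (nat \<times> nat \<Rightarrow> real) set" where
  "matrices m n = {\<theta>. \<forall>i j. (m \<le> i \<or> n \<le> j) \<longrightarrow> \<theta> (i, j) = 0}"

definition TV_r :: "nat \<Rightarrow> nat \<Rightarrow> (nat \<times> nat \<Rightarrow> real) \<Rightarrow> real" where
  "TV_r m n \<theta> = (\<Sum>i<m. \<Sum>j<n - 1. \<bar>\<theta> (i, j + 1) - \<theta> (i, j)\<bar>)"

definition TV_c :: "nat \<Rightarrow> nat \<Rightarrow> (nat \<times> nat \<Rightarrow> real) \<Rightarrow> real" where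
  "TV_c m n \<theta> = TV_r n m (\<lambda>(i, j). \<theta> (j, i))"

definition TV :: "nat \<Rightarrow> nat \<Rightarrow> (nat \<times> nat \<Rightarrow> real) \<Rightarrow> real" where
  "TV m n \<theta> = TV_r m n \<theta> + TV_c m n \<theta>"

definition frob_norm :: "nat \<Rightarrow> nat \<Rightarrow> (nat \<times> nat \<Rightarrow> real) \<Rightarrow> real" where
  "frob_norm m n \<theta> = sqrt (\<Sum>i<m. \<Sum>j<n. (\<theta> (i, j))\<^sup>2)"

definition frob_inner :: "nat \<Rightarrow> nat \<Rightarrow> (nat \<times> nat \<Rightarrow> real) \<Rightarrow> (nat \<times> nat \<Rightarrow> real) \<Rightarrow> real" where
  "frob_inner m n Z \<theta> = (\<Sum>i<m. \<Sum>j<n. Z (i, j) * \<theta> (i, j))"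

definition last_col_l1 :: "nat \<Rightarrow> nat \<Rightarrow> (nat \<times> nat \<Rightarrow> real) \<Rightarrow> real" where
  "last_col_l1 m n \<theta> = (\<Sum>i<m. \<bar>\<theta> (i, n - 1)\<bar>)"

definition M_right :: "nat \<Rightarrow> nat \<Rightarrow> real \<Rightarrow> real \<Rightarrow> (nat \<times> nat \<Rightarrow> real) set" where
  "M_right m n \<delta> t = {\<theta> \<in> matrices m n.
      TV m n \<theta> \<le> last_col_l1 m n \<theta> + \<delta> \<and> frob_norm m n \<theta> \<le> t}"

definition A_set :: "nat \<Rightarrow> nat \<Rightarrow> real \<Rightarrow> real \<Rightarrow> real \<Rightarrow> (nat \<times> nat \<Rightarrow> real) set" where
  "A_set m n u v t = {\<theta> \<in> matrices m n.
      TV_r m n \<theta> \<le> u \<and> TV_c m n \<theta> \<le> v \<and> frob_norm m n \<theta> \<le> t}"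

definition gauss_matrix :: "nat \<Rightarrow> nat \<Rightarrow> (nat \<times> nat \<Rightarrow> real) measure" where
  "gauss_matrix m n = PiM ({..<m} \<times> {..<n}) (\<lambda>_. density lborel std_normal_density)"

definition GW :: "nat \<Rightarrow> nat \<Rightarrow> (nat \<times> nat \<Rightarrow> real) set \<Rightarrow> real" where
  "GW m n S = integral\<^sup>L (gauss_matrix m n) (\<lambda>Z. SUP \<theta>\<in>S. frob_inner m n Z \<theta>)"

end

theory Submission
  imports Defs
begin


lemma frob_inner_alt: "frob_inner m n Z \<theta> = (\<Sum>p\<in>{..<m}\<times>{..<n}. Z p * \<theta> p)"
  unfolding frob_inner_def by (simp add: sum.cartesian_product)

lemma prob_gauss: "prob_space (gauss_matrix m n)"
  unfolding gauss_matrix_def by (intro prob_space_PiM prob_space_normal_density) simp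

lemma coord_integrable:
  assumes "p \<in> {..<m}\<times>{..<n}"
  shows "integrable (gauss_matrix m n) (\<lambda>Z. Z p)"
proof -
  let ?N = "density lborel std_normal_density"
  have "distr (gauss_matrix m n) ?N (\<lambda>Z. Z p) = ?N"
    unfolding gauss_matrix_def using assms
    by (intro distr_PiM_component prob_space_normal_density) auto
  moreover have "integrable ?N (\<lambda>x. x)"
    using integrable_std_normal_distribution_moment[of 1] by simp
  ultimately have "integrable (distr (gauss_matrix m n) ?N (\<lambda>Z. Z p)) (\<lambda>x. x)" by simp
  then show ?thesis
    apply (subst (asm) integrable_distr_eq)
    unfolding gauss_matrix_def using assms by auto
qed

definition GG :: "nat \<Rightarrow> nat \<Rightarrow> (nat \<times> nat \<Rightarrow> real) set \<Rightarrow> (nat \<times> nat \<Rightarrow> real) \<Rightarrow> real" where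
  "GG m n S Z = (SUP \<theta>\<in>S. frob_inner m n Z \<theta>)"

definition DD :: "nat \<Rightarrow> nat \<Rightarrow> (nat \<times> nat \<Rightarrow> real) \<Rightarrow> (nat \<times> nat \<Rightarrow> real) \<Rightarrow> real" where
  "DD m n Z Z' = (\<Sum>p\<in>{..<m}\<times>{..<n}. \<bar>Z p - Z' p\<bar>)"

locale bset =
  fixes m n :: nat and S and B :: real
  assumes B_nonneg: "0 \<le> B" and zero: "(\<lambda>_. 0) \<in> S" and bnd: "\<And>\<theta> p. \<theta> \<in> S \<Longrightarrow> p \<in> {..<m}\<times>{..<n} \<Longrightarrow> \<bar>\<theta> p\<bar> \<le> B"
begin

lemma inner_le: "\<theta> \<in> S \<Longrightarrow> frob_inner m n Z \<theta> \<le> frob_inner m n Z' \<theta> + B * DD m n Z Z'"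
proof -
  assume th: "\<theta> \<in> S"
  have "frob_inner m n Z \<theta> - frob_inner m n Z' \<theta> = (\<Sum>p\<in>{..<m}\<times>{..<n}. (Z p - Z' p) * \<theta> p)"
    unfolding frob_inner_alt by (simp add: sum_subtractf algebra_simps)
  also have "\<dots> \<le> (\<Sum>p\<in>{..<m}\<times>{..<n}. \<bar>Z p - Z' p\<bar> * B)"
  proof (rule sum_mono)
    fix p assume p: "p \<in> {..<m}\<times>{..<n}"
    have "(Z p - Z' p) * \<theta> p \<le> \<bar>(Z p - Z' p) * \<theta> p\<bar>" by simp
    also have "\<dots> = \<bar>Z p - Z' p\<bar> * \<bar>\<theta> p\<bar>" by (simp add: abs_mult)
    also have "\<dots> \<le> \<bar>Z p - Z' p\<bar> * B" using bnd[OF th p] by (intro mult_left_mono) auto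
    finally show "(Z p - Z' p) * \<theta> p \<le> \<bar>Z p - Z' p\<bar> * B" .
  qed
  also have "\<dots> = B * DD m n Z Z'" unfolding DD_def by (simp add: sum_distrib_left mult.commute)
  finally show ?thesis by simp
qed

lemma inner_bdd: "\<theta> \<in> S \<Longrightarrow> frob_inner m n Z \<theta> \<le> B * DD m n Z (\<lambda>_. 0)"
  using inner_le[of \<theta> Z "\<lambda>_. 0"] by (simp add: frob_inner_def)

lemma bdd: "bdd_above ((\<lambda>\<theta>. frob_inner m n Z \<theta>) ` S)"
  using inner_bdd by (intro bdd_aboveI2) 

lemma GG_upper: "\<theta> \<in> S \<Longrightarrow> frob_inner m n Z \<theta> \<le> GG m n S Z"
  unfolding GG_def using bdd by (rule cSUP_upper2) auto

lemma GG_nonneg: "0 \<le> GG m n S Z"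
  using GG_upper[OF zero, of Z] by (simp add: frob_inner_def)

lemma GG_le: "GG m n S Z \<le> B * DD m n Z (\<lambda>_. 0)"
  unfolding GG_def using zero inner_bdd by (intro cSUP_least) auto

lemma GG_lip: "GG m n S Z \<le> GG m n S Z' + B * DD m n Z Z'"
  unfolding GG_def using zero
proof (intro cSUP_least)
  fix \<theta> assume "\<theta> \<in> S"
  then show "frob_inner m n Z \<theta> \<le> (SUP \<theta>\<in>S. frob_inner m n Z' \<theta>) + B * DD m n Z Z'"
    using inner_le[of \<theta> Z Z'] GG_upper[of \<theta> Z'] unfolding GG_def by linarith
qed auto

lemma DD_sym: "DD m n Z Z' = DD m n Z' Z"
  unfolding DD_def by (simp add: abs_minus_commute)

lemma DD_nonneg: "0 \<le> DD m n Z Z'"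
  unfolding DD_def by (simp add: sum_nonneg)

definition "QQ = PiE ({..<m}\<times>{..<n}) (\<lambda>_. (\<rat> :: real set))"

lemma QQ_countable: "countable QQ"
  unfolding QQ_def by (intro countable_PiE countable_rat) auto

lemma dense_QQ:
  assumes "0 < \<epsilon>" shows "\<exists>q\<in>QQ. DD m n Z q < \<epsilon>"
proof -
  define e where "e = \<epsilon> / (real (m*n) + 1)"
  have e: "0 < e" unfolding e_def using assms by (intro divide_pos_pos) (auto intro!: add_nonneg_pos)
  have "\<forall>p. \<exists>r. r \<in> \<rat> \<and> Z p < r \<and> r < Z p + e"
    using Rats_dense_in_real e by (metis less_add_same_cancel1)
  then obtain r where r: "\<And>p. r p \<in> \<rat> \<and> Z p < r p \<and> r p < Z p + e" by metis
  define q where "q = restrict r ({..<m}\<times>{..<n})"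
  have rb: "\<bar>Z p - r p\<bar> \<le> e" for p using r[of p] by (simp add: abs_le_iff)
  have "q \<in> QQ" unfolding q_def QQ_def using r by auto
  moreover have "DD m n Z q \<le> (\<Sum>p\<in>{..<m}\<times>{..<n}. e)"
    unfolding DD_def q_def using rb by (intro sum_mono) auto
  moreover have "(\<Sum>p\<in>{..<m}\<times>{..<n}. e) < \<epsilon>"
  proof -
    have pos: "0 < real m * real n + 1" by (simp add: add_nonneg_pos)
    have "(\<Sum>p\<in>{..<m}\<times>{..<n}. e) = (real m * real n) * e" by (simp add: card_cartesian_product)
    also have "\<dots> = \<epsilon> * ((real m * real n) / (real m * real n + 1))" unfolding e_def by simp
    also have "\<dots> < \<epsilon> * 1" using pos assms by (intro mult_strict_left_mono) auto
    finally show ?thesis by simp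
  qed
  ultimately show ?thesis by (meson le_less_trans)
qed

lemma GG_eq: "GG m n S Z = (SUP q\<in>QQ. GG m n S q - B * DD m n Z q)"
proof -
  have ub: "GG m n S q - B * DD m n Z q \<le> GG m n S Z" for q
    using GG_lip[of q Z] DD_sym[of Z q] by simp
  have ne: "QQ \<noteq> {}" using dense_QQ[of 1 Z] by fastforce
  have bd: "bdd_above ((\<lambda>q. GG m n S q - B * DD m n Z q) ` QQ)"
    using ub by (intro bdd_aboveI2) 
  show ?thesis
  proof (rule antisym)
    show "(SUP q\<in>QQ. GG m n S q - B * DD m n Z q) \<le> GG m n S Z"
      using ne ub by (intro cSUP_least) auto
    show "GG m n S Z \<le> (SUP q\<in>QQ. GG m n S q - B * DD m n Z q)"
    proof (rule field_le_epsilon)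
      fix \<epsilon> :: real assume "0 < \<epsilon>"
      then obtain q where q: "q \<in> QQ" "DD m n Z q < \<epsilon> / (2 * B + 1)"
        using dense_QQ[of "\<epsilon> / (2 * B + 1)" Z] B_nonneg by auto
      have "2 * B * DD m n Z q \<le> \<epsilon>"
      proof -
        have "2 * B * DD m n Z q \<le> (2 * B + 1) * DD m n Z q"
          using DD_nonneg[of Z q] by (intro mult_right_mono) auto
        also have "\<dots> \<le> \<epsilon>" using q(2) B_nonneg by (simp add: field_simps)
        finally show ?thesis .
      qed
      moreover have "GG m n S Z \<le> GG m n S q + B * DD m n Z q" by (rule GG_lip)
      moreover have "GG m n S q - B * DD m n Z q \<le> (SUP q\<in>QQ. GG m n S q - B * DD m n Z q)"
        using bd q(1) by (rule cSUP_upper2) auto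
      ultimately show "GG m n S Z \<le> (SUP q\<in>QQ. GG m n S q - B * DD m n Z q) + \<epsilon>"
        by linarith
    qed
  qed
qed

lemma DD_meas: "(\<lambda>Z. DD m n Z q) \<in> borel_measurable (gauss_matrix m n)"
  unfolding DD_def gauss_matrix_def
proof (rule borel_measurable_sum)
  fix p assume p[measurable]: "p \<in> {..<m}\<times>{..<n}"
  show "(\<lambda>Z. \<bar>Z p - q p\<bar>) \<in> borel_measurable (Pi\<^sub>M ({..<m}\<times>{..<n}) (\<lambda>_. density lborel std_normal_density))"
    by measurable
qed

lemma GG_meas: "GG m n S \<in> borel_measurable (gauss_matrix m n)"
proof -
  have "GG m n S = (\<lambda>Z. SUP q\<in>QQ. GG m n S q - B * DD m n Z q)"
    by (rule ext, rule GG_eq)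
  also have "\<dots> \<in> borel_measurable (gauss_matrix m n)"
  proof (rule borel_measurable_cSUP[OF QQ_countable])
    show "\<And>q. (\<lambda>Z. GG m n S q - B * DD m n Z q) \<in> borel_measurable (gauss_matrix m n)"
      by (intro borel_measurable_diff borel_measurable_const borel_measurable_times DD_meas)
    fix Z
    show "bdd_above ((\<lambda>q. GG m n S q - B * DD m n Z q) ` QQ)"
    proof (rule bdd_aboveI2)
      fix q show "GG m n S q - B * DD m n Z q \<le> GG m n S Z"
        using GG_lip[of q Z] DD_sym[of q Z] by simp
    qed
  qed
  finally show ?thesis .
qed

lemma GG_integrable: "integrable (gauss_matrix m n) (GG m n S)"
proof (rule Bochner_Integration.integrable_bound[where f="\<lambda>Z. B * DD m n Z (\<lambda>_. 0)"])
  show "integrable (gauss_matrix m n) (\<lambda>Z. B * DD m n Z (\<lambda>_. 0))"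
    unfolding DD_def using coord_integrable by auto
  show "GG m n S \<in> borel_measurable (gauss_matrix m n)" by (rule GG_meas)
  show "AE Z in gauss_matrix m n. norm (GG m n S Z) \<le> norm (B * DD m n Z (\<lambda>_. 0))"
  proof (intro AE_I2)
    fix Z show "norm (GG m n S Z) \<le> norm (B * DD m n Z (\<lambda>_. 0))"
      using GG_le[of Z] GG_nonneg[of Z] by (metis abs_ge_self abs_of_nonneg order_trans real_norm_def)
  qed
qed

end



lemma tele:
  fixes a :: "nat \<Rightarrow> real"
  assumes "j \<le> N"
  shows "\<bar>a N\<bar> \<le> \<bar>a j\<bar> + (\<Sum>l\<in>{j..<N}. \<bar>a (l + 1) - a l\<bar>)"
  using assms
proof (induction N rule: dec_induct)
  case base then show ?case by simp
next
  case (step n)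
  have "\<bar>a (Suc n)\<bar> \<le> \<bar>a n\<bar> + \<bar>a (n + 1) - a n\<bar>" by simp
  then show ?case using step by (simp add: sum.atLeastLessThan_Suc)
qed

lemma key_col:
  assumes th: "\<theta> \<in> M_right m n \<delta> t" and j: "j' < n"
  shows "(\<Sum>i<m. \<Sum>l<j'. \<bar>\<theta> (i, l + 1) - \<theta> (i, l)\<bar>) + TV_c m n \<theta> \<le> (\<Sum>i<m. \<bar>\<theta> (i, j')\<bar>) + \<delta>"
proof -
  let ?d = "\<lambda>i l. \<bar>\<theta> (i, l + 1) - \<theta> (i, l)\<bar>"
  have row: "(\<Sum>l<n - 1. ?d i l) = (\<Sum>l<j'. ?d i l) + (\<Sum>l\<in>{j'..<n-1}. ?d i l)" for i
    using j by (simp add: lessThan_atLeast0 sum.atLeastLessThan_concat)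
  have tv: "TV_r m n \<theta> = (\<Sum>i<m. \<Sum>l<j'. ?d i l) + (\<Sum>i<m. \<Sum>l\<in>{j'..<n-1}. ?d i l)"
    unfolding TV_r_def row by (simp add: sum.distrib)
  have r: "\<bar>\<theta> (i, n - 1)\<bar> \<le> \<bar>\<theta> (i, j')\<bar> + (\<Sum>l\<in>{j'..<n-1}. ?d i l)" for i
    using tele[of j' "n - 1" "\<lambda>l. \<theta> (i, l)"] j by simp
  have lc: "last_col_l1 m n \<theta> \<le> (\<Sum>i<m. \<bar>\<theta> (i, j')\<bar>) + (\<Sum>i<m. \<Sum>l\<in>{j'..<n-1}. ?d i l)"
    unfolding last_col_l1_def sum.distrib[symmetric]
    by (intro sum_mono r)
  have "TV m n \<theta> \<le> last_col_l1 m n \<theta> + \<delta>" using th unfolding M_right_def by auto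
  then show ?thesis using tv lc unfolding TV_def by linarith
qed

lemma cs_abs:
  fixes f :: "'a \<Rightarrow> real"
  shows "(\<Sum>x\<in>A. \<bar>f x\<bar>) \<le> sqrt (real (card A)) * sqrt (\<Sum>x\<in>A. (f x)\<^sup>2)"
proof -
  have "(\<Sum>x\<in>A. \<bar>f x\<bar> * 1)\<^sup>2 \<le> (\<Sum>x\<in>A. \<bar>f x\<bar>\<^sup>2) * (\<Sum>x\<in>A. 1\<^sup>2)"
    by (rule Cauchy_Schwarz_ineq_sum)
  then have "(\<Sum>x\<in>A. \<bar>f x\<bar>)\<^sup>2 \<le> real (card A) * (\<Sum>x\<in>A. (f x)\<^sup>2)" by (simp add: mult.commute)
  then have "(\<Sum>x\<in>A. \<bar>f x\<bar>) \<le> sqrt (real (card A) * (\<Sum>x\<in>A. (f x)\<^sup>2))" by (rule real_le_rsqrt)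
  then show ?thesis by (simp add: real_sqrt_mult)
qed

lemma colsum_bound:
  assumes "frob_norm m n \<theta> \<le> t" and P: "P \<subseteq> {..<n}"
  shows "(\<Sum>j\<in>P. \<Sum>i<m. \<bar>\<theta> (i, j)\<bar>) \<le> sqrt (real m * real (card P)) * t"
proof -
  have fin: "finite P" using P finite_subset by blast
  have "(\<Sum>j\<in>P. \<Sum>i<m. \<bar>\<theta> (i, j)\<bar>) = (\<Sum>q\<in>P \<times> {..<m}. \<bar>\<theta> (snd q, fst q)\<bar>)"
    by (simp add: sum.cartesian_product split_def)
  also have "\<dots> \<le> sqrt (real (card (P \<times> {..<m}))) * sqrt (\<Sum>q\<in>P \<times> {..<m}. (\<theta> (snd q, fst q))\<^sup>2)"
    by (rule cs_abs)
  also have "(\<Sum>q\<in>P \<times> {..<m}. (\<theta> (snd q, fst q))\<^sup>2) = (\<Sum>j\<in>P. \<Sum>i<m. (\<theta> (i, j))\<^sup>2)"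
    by (simp add: sum.cartesian_product split_def)
  also have "\<dots> \<le> (\<Sum>j<n. \<Sum>i<m. (\<theta> (i, j))\<^sup>2)"
    using P by (intro sum_mono2) (auto intro: sum_nonneg)
  also have "\<dots> = (\<Sum>i<m. \<Sum>j<n. (\<theta> (i, j))\<^sup>2)" by (rule sum.swap)
  finally have "(\<Sum>j\<in>P. \<Sum>i<m. \<bar>\<theta> (i, j)\<bar>) \<le> sqrt (real (card (P \<times> {..<m}))) * frob_norm m n \<theta>"
    unfolding frob_norm_def by (simp add: mult_left_mono)
  also have "\<dots> \<le> sqrt (real (card (P \<times> {..<m}))) * t" using assms(1) by (simp add: mult_left_mono)
  finally show ?thesis using fin by (simp add: card_cartesian_product mult.commute)
qed

lemma avg:
  assumes "0 < p" "real p * X \<le> sqrt (real m * real p) * t + real p * \<delta>"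
  shows "X \<le> t * sqrt (real m / real p) + \<delta>"
proof -
  have "sqrt (real m * real p) = real p * sqrt (real m / real p)"
  proof -
    have "sqrt (real m * real p) = sqrt ((real p)\<^sup>2 * (real m / real p))" using assms(1) by (simp add: power2_eq_square)
    also have "\<dots> = real p * sqrt (real m / real p)" by (subst real_sqrt_mult) simp
    finally show ?thesis .
  qed
  then have "real p * X \<le> real p * (t * sqrt (real m / real p) + \<delta>)" using assms(2) by (simp add: algebra_simps)
  then show ?thesis using assms(1) by simp
qed

definition blk :: "nat \<Rightarrow> nat \<Rightarrow> nat \<Rightarrow> (nat \<times> nat \<Rightarrow> real) \<Rightarrow> (nat \<times> nat \<Rightarrow> real)" where
  "blk m c w \<theta> = (\<lambda>(i, l). if i < m \<and> l < w then \<theta> (i, l + c) else 0)"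

lemma blk_TVr:
  assumes "c + w - 1 \<le> j'"
  shows "TV_r m w (blk m c w \<theta>) \<le> (\<Sum>i<m. \<Sum>l<j'. \<bar>\<theta> (i, l + 1) - \<theta> (i, l)\<bar>)"
  unfolding TV_r_def
proof (rule sum_mono)
  fix i assume i: "i \<in> {..<m}"
  let ?d = "\<lambda>l. \<bar>\<theta> (i, l + 1) - \<theta> (i, l)\<bar>"
  have "(\<Sum>l<w - 1. \<bar>blk m c w \<theta> (i, l + 1) - blk m c w \<theta> (i, l)\<bar>) = (\<Sum>l\<in>{0..<w - 1}. ?d (l + c))"
    using i by (intro sum.cong) (auto simp: blk_def algebra_simps)
  also have "\<dots> = (\<Sum>l\<in>{0 + c..<(w - 1) + c}. ?d l)" by (rule sum.shift_bounds_nat_ivl[symmetric])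
  also have "\<dots> \<le> (\<Sum>l<j'. ?d l)" using assms by (intro sum_mono2) auto
  finally show "(\<Sum>l<w - 1. \<bar>blk m c w \<theta> (i, l + 1) - blk m c w \<theta> (i, l)\<bar>) \<le> (\<Sum>l<j'. ?d l)" .
qed

lemma blk_TVc:
  assumes "c + w \<le> n"
  shows "TV_c m w (blk m c w \<theta>) \<le> TV_c m n \<theta>"
proof -
  have "TV_c m w (blk m c w \<theta>) = (\<Sum>l<w. \<Sum>i<m - 1. \<bar>\<theta> (i + 1, l + c) - \<theta> (i, l + c)\<bar>)"
    unfolding TV_c_def TV_r_def by (intro sum.cong) (auto simp: blk_def)
  also have "\<dots> = (\<Sum>l\<in>{0 + c..<w + c}. \<Sum>i<m - 1. \<bar>\<theta> (i + 1, l) - \<theta> (i, l)\<bar>)"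
    unfolding lessThan_atLeast0 by (rule sum.shift_bounds_nat_ivl[symmetric])
  also have "\<dots> \<le> (\<Sum>l<n. \<Sum>i<m - 1. \<bar>\<theta> (i + 1, l) - \<theta> (i, l)\<bar>)"
    using assms by (intro sum_mono2) (auto intro: sum_nonneg)
  also have "\<dots> = TV_c m n \<theta>" unfolding TV_c_def TV_r_def by simp
  finally show ?thesis .
qed

lemma blk_norm:
  assumes "c + w \<le> n"
  shows "frob_norm m w (blk m c w \<theta>) \<le> frob_norm m n \<theta>"
  unfolding frob_norm_def
proof (rule real_sqrt_le_mono, rule sum_mono)
  fix i assume i: "i \<in> {..<m}"
  have "(\<Sum>l<w. (blk m c w \<theta> (i, l))\<^sup>2) = (\<Sum>l\<in>{0..<w}. (\<theta> (i, l + c))\<^sup>2)"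
    using i by (intro sum.cong) (auto simp: blk_def)
  also have "\<dots> = (\<Sum>l\<in>{0 + c..<w + c}. (\<theta> (i, l))\<^sup>2)" by (rule sum.shift_bounds_nat_ivl[symmetric])
  also have "\<dots> \<le> (\<Sum>l<n. (\<theta> (i, l))\<^sup>2)" using assms by (intro sum_mono2) auto
  finally show "(\<Sum>l<w. (blk m c w \<theta> (i, l))\<^sup>2) \<le> (\<Sum>l<n. (\<theta> (i, l))\<^sup>2)" .
qed

lemma avg_sum:
  assumes "frob_norm m n \<theta> \<le> t" "P \<subseteq> {..<n}" "P \<noteq> {}"
    and X: "\<And>j'. j' \<in> P \<Longrightarrow> X \<le> (\<Sum>i<m. \<bar>\<theta> (i, j')\<bar>) + \<delta>"
  shows "X \<le> t * sqrt (real m / real (card P)) + \<delta>"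
proof (rule avg)
  have fin: "finite P" using assms(2) finite_subset by blast
  then show "0 < card P" using assms(3) by (simp add: card_gt_0_iff)
  have "real (card P) * X = (\<Sum>j'\<in>P. X)" by simp
  also have "\<dots> \<le> (\<Sum>j'\<in>P. (\<Sum>i<m. \<bar>\<theta> (i, j')\<bar>) + \<delta>)" using X by (rule sum_mono)
  also have "\<dots> = (\<Sum>j'\<in>P. \<Sum>i<m. \<bar>\<theta> (i, j')\<bar>) + real (card P) * \<delta>" by (simp add: sum.distrib)
  also have "\<dots> \<le> sqrt (real m * real (card P)) * t + real (card P) * \<delta>"
    using colsum_bound[OF assms(1,2)] by simp
  finally show "real (card P) * X \<le> sqrt (real m * real (card P)) * t + real (card P) * \<delta>" .
qed

lemma TVc_nonneg: "0 \<le> TV_c m n \<theta>"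
  unfolding TV_c_def TV_r_def by (intro sum_nonneg) auto

lemma blk_in_A:
  assumes th: "\<theta> \<in> M_right m n \<delta> t" and w: "0 < w" and cw: "c + 2 * w \<le> n + 1" and t: "0 \<le> t"
  shows "blk m c w \<theta> \<in> A_set m w (2 * t * sqrt (real m / real w) + \<delta>) (t * sqrt (real m / real n) + \<delta>) t"
proof -
  have fr: "frob_norm m n \<theta> \<le> t" using th unfolding M_right_def by auto
  have cw': "c + w \<le> n" using cw w by linarith
  have n: "0 < n" using cw' w by linarith
  have mat: "blk m c w \<theta> \<in> matrices m w" unfolding matrices_def blk_def by auto
  let ?e = "c + w - 1"
  have r1: "TV_r m w (blk m c w \<theta>) \<le> t * sqrt (real m / real (card {?e..<n})) + \<delta>"
  proof (rule avg_sum[OF fr])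
    show "{?e..<n} \<subseteq> {..<n}" by auto
    show "{?e..<n} \<noteq> {}" using cw' w by auto
    fix j' assume j': "j' \<in> {?e..<n}"
    have "TV_r m w (blk m c w \<theta>) \<le> (\<Sum>i<m. \<Sum>l<j'. \<bar>\<theta> (i, l + 1) - \<theta> (i, l)\<bar>)"
      using j' by (intro blk_TVr) auto
    moreover have "(\<Sum>i<m. \<Sum>l<j'. \<bar>\<theta> (i, l + 1) - \<theta> (i, l)\<bar>) + TV_c m n \<theta> \<le> (\<Sum>i<m. \<bar>\<theta> (i, j')\<bar>) + \<delta>"
      using j' by (intro key_col[OF th]) auto
    ultimately show "TV_r m w (blk m c w \<theta>) \<le> (\<Sum>i<m. \<bar>\<theta> (i, j')\<bar>) + \<delta>"
      using TVc_nonneg[of m n \<theta>] by linarith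
  qed
  have "real w \<le> real (card {?e..<n})" using cw w by simp
  then have "sqrt (real m / real (card {?e..<n})) \<le> sqrt (real m / real w)"
    using w by (intro real_sqrt_le_mono divide_left_mono) auto
  then have "t * sqrt (real m / real (card {?e..<n})) \<le> 2 * t * sqrt (real m / real w)"
  proof -
    have "t * sqrt (real m / real (card {?e..<n})) \<le> t * sqrt (real m / real w)"
      using \<open>sqrt (real m / real (card {?e..<n})) \<le> sqrt (real m / real w)\<close> t by (rule mult_left_mono)
    moreover have "0 \<le> t * sqrt (real m / real w)" using t by simp
    ultimately show ?thesis by linarith
  qed
  with r1 have r: "TV_r m w (blk m c w \<theta>) \<le> 2 * t * sqrt (real m / real w) + \<delta>" by linarith
  have c1: "TV_c m n \<theta> \<le> t * sqrt (real m / real (card {..<n})) + \<delta>"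
  proof (rule avg_sum[OF fr])
    show "{..<n} \<subseteq> {..<n}" "{..<n} \<noteq> {}" using n by auto
    fix j' assume j': "j' \<in> {..<n}"
    have "0 \<le> (\<Sum>i<m. \<Sum>l<j'. \<bar>\<theta> (i, l + 1) - \<theta> (i, l)\<bar>)" by (intro sum_nonneg) auto
    moreover have "(\<Sum>i<m. \<Sum>l<j'. \<bar>\<theta> (i, l + 1) - \<theta> (i, l)\<bar>) + TV_c m n \<theta> \<le> (\<Sum>i<m. \<bar>\<theta> (i, j')\<bar>) + \<delta>"
      using j' by (intro key_col[OF th]) auto
    ultimately show "TV_c m n \<theta> \<le> (\<Sum>i<m. \<bar>\<theta> (i, j')\<bar>) + \<delta>" by linarith
  qed
  have c: "TV_c m w (blk m c w \<theta>) \<le> t * sqrt (real m / real n) + \<delta>"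
    using c1 blk_TVc[OF cw', of m \<theta>] by simp
  have nm: "frob_norm m w (blk m c w \<theta>) \<le> t" using blk_norm[OF cw', of m \<theta>] fr by linarith
  show ?thesis unfolding A_set_def using mat r c nm by auto
qed



definition zb :: "nat \<Rightarrow> nat \<Rightarrow> nat \<Rightarrow> (nat \<times> nat \<Rightarrow> real) \<Rightarrow> (nat \<times> nat \<Rightarrow> real)" where
  "zb m c w Z = (\<lambda>p\<in>{..<m}\<times>{..<w}. Z (fst p, snd p + c))"

lemma zb_meas:
  assumes "c + w \<le> n"
  shows "zb m c w \<in> measurable (gauss_matrix m n) (gauss_matrix m w)"
  unfolding zb_def gauss_matrix_def
proof (rule measurable_restrict)
  fix p assume p: "p \<in> {..<m}\<times>{..<w}"
  then have "(fst p, snd p + c) \<in> {..<m}\<times>{..<n}" using assms by auto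
  then show "(\<lambda>Z. Z (fst p, snd p + c)) \<in> measurable (Pi\<^sub>M ({..<m}\<times>{..<n}) (\<lambda>_. density lborel std_normal_density)) (density lborel std_normal_density)"
    by (rule measurable_component_singleton)
qed

lemma zb_distr:
  assumes "c + w \<le> n"
  shows "distr (gauss_matrix m n) (gauss_matrix m w) (zb m c w) = gauss_matrix m w"
proof -
  have "distr (Pi\<^sub>M ({..<m}\<times>{..<n}) (\<lambda>_. density lborel std_normal_density))
          (Pi\<^sub>M ({..<m}\<times>{..<w}) (\<lambda>i. (\<lambda>_. density lborel std_normal_density) ((\<lambda>p. (fst p, snd p + c)) i)))
          (\<lambda>\<omega>. \<lambda>i\<in>{..<m}\<times>{..<w}. \<omega> ((\<lambda>p. (fst p, snd p + c)) i))
        = Pi\<^sub>M ({..<m}\<times>{..<w}) (\<lambda>i. (\<lambda>_. density lborel std_normal_density) ((\<lambda>p. (fst p, snd p + c)) i))"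
    using assms by (intro distr_PiM_reindex prob_space_normal_density) (auto simp: inj_on_def)
  then show ?thesis unfolding gauss_matrix_def zb_def by simp
qed

lemma zb_integral:
  fixes g :: "(nat \<times> nat \<Rightarrow> real) \<Rightarrow> real"
  assumes "c + w \<le> n" and g: "g \<in> borel_measurable (gauss_matrix m w)"
  shows "integral\<^sup>L (gauss_matrix m w) g = integral\<^sup>L (gauss_matrix m n) (\<lambda>Z. g (zb m c w Z))"
  using integral_distr[OF zb_meas[OF assms(1), of m] g] zb_distr[OF assms(1)] by simp

lemma zb_integrable:
  fixes g :: "(nat \<times> nat \<Rightarrow> real) \<Rightarrow> real"
  assumes "c + w \<le> n" and g: "integrable (gauss_matrix m w) g"
  shows "integrable (gauss_matrix m n) (\<lambda>Z. g (zb m c w Z))"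
proof -
  have "integrable (distr (gauss_matrix m n) (gauss_matrix m w) (zb m c w)) g"
    using zb_distr[OF assms(1)] g by simp
  then show ?thesis
    using integrable_distr_eq[OF zb_meas[OF assms(1), of m] borel_measurable_integrable[OF g]] by simp
qed

lemma inner_blk:
  "frob_inner m w (zb m c w Z) (blk m c w \<theta>) = (\<Sum>i<m. \<Sum>l<w. Z (i, l + c) * \<theta> (i, l + c))"
  unfolding frob_inner_def zb_def blk_def by simp

lemma sum_split_add:
  fixes f :: "nat \<Rightarrow> 'a::comm_monoid_add"
  shows "(\<Sum>l<a + b. f l) = (\<Sum>l<a. f l) + (\<Sum>l<b. f (l + a))"
proof -
  have "(\<Sum>l<a + b. f l) = (\<Sum>l\<in>{0..<a}. f l) + (\<Sum>l\<in>{a..<a + b}. f l)"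
    unfolding lessThan_atLeast0 by (rule sum.atLeastLessThan_concat[symmetric]) auto
  also have "(\<Sum>l\<in>{a..<a + b}. f l) = (\<Sum>l\<in>{0 + a..<b + a}. f l)" by (simp add: add.commute)
  also have "\<dots> = (\<Sum>l\<in>{0..<b}. f (l + a))" by (rule sum.shift_bounds_nat_ivl)
  finally show ?thesis by (simp add: lessThan_atLeast0)
qed

definition s2 :: "nat \<Rightarrow> nat" where "s2 K = (\<Sum>i<K. 2 ^ i)"

lemma s2_Suc: "s2 (Suc K) = s2 K + 2 ^ K" unfolding s2_def by simp

lemma s2_0: "s2 0 = 0" unfolding s2_def by simp

lemma s2_eq: "s2 K + 1 = 2 ^ K"
  by (induction K) (auto simp: s2_Suc s2_0)

lemma part:
  fixes f :: "nat \<Rightarrow> 'a::comm_monoid_add"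
  assumes "s2 K \<le> n"
  shows "(\<Sum>l<n. f l) = (\<Sum>l<n - s2 K. f l) + (\<Sum>j<K. \<Sum>l<2 ^ j. f (l + (n - s2 (Suc j))))"
  using assms
proof (induction K)
  case 0 then show ?case by (simp add: s2_def)
next
  case (Suc K)
  have le: "s2 K \<le> n" using Suc.prems s2_Suc[of K] by linarith
  have eq: "n - s2 K = (n - s2 (Suc K)) + 2 ^ K" using Suc.prems s2_Suc[of K] by linarith
  have "(\<Sum>l<n - s2 K. f l) = (\<Sum>l<n - s2 (Suc K). f l) + (\<Sum>l<2 ^ K. f (l + (n - s2 (Suc K))))"
    unfolding eq by (rule sum_split_add)
  then show ?case using Suc.IH[OF le] by (simp add: ac_simps)
qed



lemma entry_le_frob:
  assumes "i < m" "l < n"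
  shows "\<bar>\<theta> (i, l)\<bar> \<le> frob_norm m n \<theta>"
proof -
  have "(\<theta> (i, l))\<^sup>2 \<le> (\<Sum>l'<n. (\<theta> (i, l'))\<^sup>2)"
    using assms by (intro member_le_sum) auto
  also have "\<dots> \<le> (\<Sum>i'<m. \<Sum>l'<n. (\<theta> (i', l'))\<^sup>2)"
    using assms by (intro member_le_sum[where f="\<lambda>i'. \<Sum>l'<n. (\<theta> (i', l'))\<^sup>2"]) (auto intro: sum_nonneg)
  finally have "sqrt ((\<theta> (i, l))\<^sup>2) \<le> frob_norm m n \<theta>"
    unfolding frob_norm_def by (rule real_sqrt_le_mono)
  then show ?thesis by simp
qed

lemma s2_mono: "a \<le> b \<Longrightarrow> s2 a \<le> s2 b"
  unfolding s2_def by (intro sum_mono2) auto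

lemma s2_atMost: "(\<Sum>j\<le>N. (2::nat) ^ j) = s2 (Suc N)"
  unfolding s2_def by (simp add: lessThan_Suc_atMost)

theorem lemma5p15:
  fixes m n :: nat and \<delta> t :: real and k :: nat and nb :: "nat \<Rightarrow> nat"
  assumes "0 < m" and "0 < n" and "0 < \<delta>" and "0 < t"
  defines "k \<equiv> (LEAST k::nat. n \<le> (\<Sum>j\<le>k. 2 ^ j))"
  defines "nb \<equiv> (\<lambda>j. if j < k then 2 ^ j else n - (\<Sum>i<k. 2 ^ i))"
  shows "GW m n (M_right m n \<delta> t)
    \<le> (\<Sum>j\<le>k. GW m (nb j)
          (A_set m (nb j) (2 * t * sqrt (real m / real (nb j)) + \<delta>)
                          (t * sqrt (real m / real n) + \<delta>) t))"
proof -
  note mpos = assms(1) and npos = assms(2) and dpos = assms(3) and tpos = assms(4)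
  have ex: "n \<le> (\<Sum>j\<le>n. (2::nat) ^ j)"
  proof -
    have "n < 2 ^ n" by (rule less_exp)
    also have "(2::nat) ^ n \<le> s2 (Suc n)" by (simp add: s2_Suc)
    finally show ?thesis by (simp add: s2_atMost)
  qed
  have kP: "n \<le> s2 (Suc k)"
    using LeastI[of "\<lambda>k. n \<le> (\<Sum>j\<le>k. (2::nat) ^ j)", OF ex] unfolding k_def s2_atMost .
  have sk: "s2 k < n"
  proof (cases k)
    case 0 then show ?thesis using npos by (simp add: s2_0)
  next
    case (Suc k')
    then have "k' < k" by simp
    then have "\<not> n \<le> (\<Sum>j\<le>k'. (2::nat) ^ j)" unfolding k_def by (rule not_less_Least)
    then show ?thesis unfolding s2_atMost Suc by simp
  qed
  have nb_eq: "nb j = (if j < k then 2 ^ j else n - s2 k)" for j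
    unfolding nb_def s2_def by simp
  define off where "off j = (if j < k then n - s2 (Suc j) else 0)" for j
  have cond: "0 < nb j \<and> off j + 2 * nb j \<le> n + 1" if j: "j \<le> k" for j
  proof (cases "j < k")
    case True
    have "s2 (Suc j) \<le> s2 k" using True by (intro s2_mono) auto
    moreover have "s2 (Suc j) + 1 = 2 * 2 ^ j" using s2_eq[of "Suc j"] by simp
    ultimately show ?thesis using True sk unfolding nb_eq off_def by auto
  next
    case False
    then have "j = k" using j by simp
    moreover have "s2 (Suc k) = s2 k + s2 k + 1" using s2_Suc[of k] s2_eq[of k] by simp
    ultimately show ?thesis using False sk kP unfolding nb_eq off_def by auto
  qed
  have cond2: "off j + nb j \<le> n" if "j \<le> k" for j using cond[OF that] by linarith
  have decomp: "(\<Sum>l<n. f l) = (\<Sum>j\<le>k. \<Sum>l<nb j. f (l + off j))" for f :: "nat \<Rightarrow> real"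
  proof -
    have "(\<Sum>l<n. f l) = (\<Sum>l<n - s2 k. f l) + (\<Sum>j<k. \<Sum>l<2 ^ j. f (l + (n - s2 (Suc j))))"
      using sk by (intro part) auto
    also have "(\<Sum>j<k. \<Sum>l<2 ^ j. f (l + (n - s2 (Suc j)))) = (\<Sum>j<k. \<Sum>l<nb j. f (l + off j))"
      by (intro sum.cong) (auto simp: nb_eq off_def)
    also have "(\<Sum>l<n - s2 k. f l) = (\<Sum>l<nb k. f (l + off k))"
      by (simp add: nb_eq off_def)
    finally show ?thesis by (simp add: lessThan_Suc_atMost[symmetric] add.commute)
  qed
  define A where "A j = A_set m (nb j) (2 * t * sqrt (real m / real (nb j)) + \<delta>)
                          (t * sqrt (real m / real n) + \<delta>) t" for j
  have bs: "bset m (nb j) (A j) t" for j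
  proof
    show "0 \<le> t" using tpos by simp
    show "(\<lambda>_. 0) \<in> A j"
      unfolding A_def A_set_def matrices_def TV_r_def TV_c_def frob_norm_def
      using tpos dpos by (auto intro!: add_nonneg_pos)
    fix \<theta> p assume "\<theta> \<in> A j" "p \<in> {..<m} \<times> {..<nb j}"
    then show "\<bar>\<theta> p\<bar> \<le> t"
      using entry_le_frob[of "fst p" m "snd p" "nb j" \<theta>] unfolding A_def A_set_def by auto
  qed
  let ?M = "M_right m n \<delta> t"
  have M0: "(\<lambda>_. 0) \<in> ?M"
    unfolding M_right_def matrices_def TV_def TV_r_def TV_c_def frob_norm_def last_col_l1_def
    using tpos dpos by auto
  have pw: "GG m n ?M Z \<le> (\<Sum>j\<le>k. GG m (nb j) (A j) (zb m (off j) (nb j) Z))" for Z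
    unfolding GG_def[of m n]
  proof (rule cSUP_least)
    show "?M \<noteq> {}" using M0 by auto
    fix \<theta> assume th: "\<theta> \<in> ?M"
    have "frob_inner m n Z \<theta> = (\<Sum>i<m. \<Sum>j\<le>k. \<Sum>l<nb j. Z (i, l + off j) * \<theta> (i, l + off j))"
      unfolding frob_inner_def by (intro sum.cong refl decomp)
    also have "\<dots> = (\<Sum>j\<le>k. frob_inner m (nb j) (zb m (off j) (nb j) Z) (blk m (off j) (nb j) \<theta>))"
      unfolding inner_blk by (rule sum.swap)
    also have "\<dots> \<le> (\<Sum>j\<le>k. GG m (nb j) (A j) (zb m (off j) (nb j) Z))"
    proof (rule sum_mono)
      fix j assume "j \<in> {..k}"
      then have "blk m (off j) (nb j) \<theta> \<in> A j"
        unfolding A_def using cond[of j] tpos by (intro blk_in_A th) auto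
      then show "frob_inner m (nb j) (zb m (off j) (nb j) Z) (blk m (off j) (nb j) \<theta>)
          \<le> GG m (nb j) (A j) (zb m (off j) (nb j) Z)"
        by (rule bset.GG_upper[OF bs])
    qed
    finally show "frob_inner m n Z \<theta> \<le> (\<Sum>j\<le>k. GG m (nb j) (A j) (zb m (off j) (nb j) Z))" .
  qed
  have intj: "integrable (gauss_matrix m n) (\<lambda>Z. GG m (nb j) (A j) (zb m (off j) (nb j) Z))" if "j \<le> k" for j
    using cond2[OF that] bset.GG_integrable[OF bs] by (rule zb_integrable)
  have "GW m n ?M = integral\<^sup>L (gauss_matrix m n) (GG m n ?M)"
    unfolding GW_def GG_def by simp
  also have "\<dots> \<le> integral\<^sup>L (gauss_matrix m n) (\<lambda>Z. \<Sum>j\<le>k. GG m (nb j) (A j) (zb m (off j) (nb j) Z))"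
  proof (rule integral_mono')
    show "integrable (gauss_matrix m n) (\<lambda>Z. \<Sum>j\<le>k. GG m (nb j) (A j) (zb m (off j) (nb j) Z))"
      using intj by auto
    show "\<And>Z. Z \<in> space (gauss_matrix m n) \<Longrightarrow> GG m n ?M Z \<le> (\<Sum>j\<le>k. GG m (nb j) (A j) (zb m (off j) (nb j) Z))"
      using pw by blast
    show "\<And>Z. Z \<in> space (gauss_matrix m n) \<Longrightarrow> 0 \<le> (\<Sum>j\<le>k. GG m (nb j) (A j) (zb m (off j) (nb j) Z))"
      using bset.GG_nonneg[OF bs] by (auto intro: sum_nonneg)
  qed
  also have "\<dots> = (\<Sum>j\<le>k. integral\<^sup>L (gauss_matrix m n) (\<lambda>Z. GG m (nb j) (A j) (zb m (off j) (nb j) Z)))"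
    by (rule Bochner_Integration.integral_sum[where f="\<lambda>j Z. GG m (nb j) (A j) (zb m (off j) (nb j) Z)"]) (use intj in auto)
  also have "\<dots> = (\<Sum>j\<le>k. GW m (nb j) (A j))"
  proof (rule sum.cong[OF refl])
    fix j assume "j \<in> {..k}"
    then have "integral\<^sup>L (gauss_matrix m (nb j)) (GG m (nb j) (A j))
        = integral\<^sup>L (gauss_matrix m n) (\<lambda>Z. GG m (nb j) (A j) (zb m (off j) (nb j) Z))"
      using cond2[of j] bset.GG_meas[OF bs] by (intro zb_integral) auto
    then show "integral\<^sup>L (gauss_matrix m n) (\<lambda>Z. GG m (nb j) (A j) (zb m (off j) (nb j) Z)) = GW m (nb j) (A j)"
      unfolding GW_def GG_def by simp
  qed
  finally show ?thesis unfolding A_def .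
qed


end
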